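(* Let $\Omega>0$ denote the maximum absolute value of the stored quantities, let $C$ be the column index of the array of executed (visited) indicators in $X\in\mathbb{R}^{K\times d}$, and let $E$ be a target column index. Then there exists a single transformer layer that simulates the termination operation $X[1,E]\leftarrow(\text{no entry of }X[2{:},C]\text{ equals }0)$, i.e. it writes $1$ into $X[1,E]$ if none of the entries $X[2,C],\dots,X[K,C]$ is zero and $0$ otherwise.
   Context: Conventions: rows/columns indexed from $1$; $X[i,j]$ is the $(i,j)$ entry; $X[2{:},j]$ denotes the entries of column $j$ in rows $2,\dots,K$. $\phi(x)=\max\{x,0\}$ entrywise. Hardmax $\sigma$: row $i$ of $\sigma(\Phi)$ is $\frac{1}{|S_i|}\sum_{k\in S_i}e_k$, $S_i=\{k:\Phi_{ik}=\max_j\Phi_{ij}\}$. Positional encoding: $p_0=(0,1)^\top$, $p_i=R_{\widehat\delta}^\top p_{i-1}$ with $R_{\widehat\delta}=\begin{bmatrix}\cos\widehat\delta&-\sin\widehat\delta\\ \sin\widehat\delta&\cos\widehat\delta\end{bmatrix}$, $\widehat\delta$ the nearest representable approximation of the minimum increment angle. For a weighted hypergraph with incident matrix $A\in\mathbb{R}^{n_v\times n_e}$ ($A_{ij}=w(e_j)$ if vertex $v_i\in e_j$, else $0$) and $K\ge\max\{n_v,n_e\}+1$, the padded incident matrix $\widetilde A\in\mathbb{R}^{K\times K}$ has $\widetilde A_{i+1,j+1}=A_{ij}$, zeros elsewhere. A transformer layer on $X\in\mathbb{R}^{K\times d}$ is $f(X,\widetilde A)=f_{\mathrm{mlp}}(f_{\mathrm{attn}}(X,\widetilde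 A))$, $f_{\mathrm{attn}}(X,\widetilde A)=\sum_{i\in M_A}\psi^{(i)}(X,\widetilde A)+\sum_{i\in M_{A^\top}}\psi^{(i)}(X,\widetilde A^\top)+\sum_{i\in M}\psi^{(i)}(X,I_K)+X$, $\psi(X,B)=B\,\sigma(XW_QW_K^\top X^\top)XW_V$ ($W_Q,W_K\in\mathbb{R}^{d\times2}$, $W_V\in\mathbb{R}^{d\times d}$), $f_{\mathrm{mlp}}(X)=Z^{(4)}W^{(4)}+X$, $Z^{(1)}=X$, $Z^{(j+1)}=\phi(Z^{(j)}W^{(j)})$ ($j=1,2,3$). Storage convention: scalars in the top row of a column (rest $0$), arrays of length $K-1$ in rows $2,\dots,K$ (top $0$); designated columns $B_{\mathrm{global}}$ (top $1$, rest $0$), $B_{\mathrm{local}}$ (top $0$, rest $1$), positional columns $P_1,P_2$ (array position $i$ holds $p_i^{(1)},p_i^{(2)}$), and scratchpad columns. "Simulating an operation" means the layer's weights can be chosen so that applying it to $X$ performs the stated update. *)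

theory Defs
  imports "Jordan_Normal_Form.Matrix"
begin

text \<open>Matrices are Jordan_Normal_Form matrices (0-based internally).
  The paper's 1-based entry X[i,j] is written ent X i j.\<close>

definition ent :: "real mat \<Rightarrow> nat \<Rightarrow> nat \<Rightarrow> real" where
  "ent X i j = X $$ (i - 1, j - 1)"

definition relu_mat :: "real mat \<Rightarrow> real mat" where
  "relu_mat M = map_mat (\<lambda>x. max x 0) M"

definition hardmax :: "real mat \<Rightarrow> real mat" where
  "hardmax P = mat (dim_row P) (dim_col P) (\<lambda>(i, j).
     (let m = Max {P $$ (i, k) | k. k < dim_col P};
          S = {k. k < dim_col P \<and> P $$ (i, k) = m}
      in if P $$ (i, j) = m then 1 / real (card S) else 0))"

type_synonym head = "real mat \<times> real mat \<times> real mat"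

definition psi :: "head \<Rightarrow> real mat \<Rightarrow> real mat \<Rightarrow> real mat" where
  "psi h X B = (case h of (WQ, WK, WV) \<Rightarrow>
     B * hardmax (X * WQ * transpose_mat WK * transpose_mat X) * X * WV)"

definition sum_heads :: "head list \<Rightarrow> real mat \<Rightarrow> real mat \<Rightarrow> real mat" where
  "sum_heads hs X B = foldr (\<lambda>h acc. psi h X B + acc) hs (0\<^sub>m (dim_row X) (dim_col X))"

record layer =
  heads_A  :: "head list"
  heads_AT :: "head list"
  heads_I  :: "head list"
  W1 :: "real mat"
  W2 :: "real mat"
  W3 :: "real mat"
  W4 :: "real mat"

definition valid_head :: "nat \<Rightarrow> head \<Rightarrow> bool" where
  "valid_head d h = (case h of (WQ, WK, WV) \<Rightarrow>
     WQ \<in> carrier_mat d 2 \<and> WK \<in> carrier_mat d 2 \<and> WV \<in> carrier_mat d d)"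

definition valid_layer :: "nat \<Rightarrow> layer \<Rightarrow> bool" where
  "valid_layer d L = ((\<forall>h \<in> set (heads_A L) \<union> set (heads_AT L) \<union> set (heads_I L). valid_head d h)
     \<and> (\<exists>h1 h2 h3. W1 L \<in> carrier_mat d h1 \<and> W2 L \<in> carrier_mat h1 h2
        \<and> W3 L \<in> carrier_mat h2 h3 \<and> W4 L \<in> carrier_mat h3 d))"

definition f_attn :: "layer \<Rightarrow> real mat \<Rightarrow> real mat \<Rightarrow> real mat" where
  "f_attn L X A = sum_heads (heads_A L) X A + sum_heads (heads_AT L) X (transpose_mat A)
      + sum_heads (heads_I L) X (1\<^sub>m (dim_row X)) + X"

definition f_mlp :: "layer \<Rightarrow> real mat \<Rightarrow> real mat" where
  "f_mlp L X = relu_mat (relu_mat (relu_mat (X * W1 L) * W2 L) * W3 L) * W4 L + X"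

definition apply_layer :: "layer \<Rightarrow> real mat \<Rightarrow> real mat \<Rightarrow> real mat" where
  "apply_layer L X A = f_mlp L (f_attn L X A)"

definition upd_entry :: "real mat \<Rightarrow> nat \<Rightarrow> nat \<Rightarrow> real \<Rightarrow> real mat" where
  "upd_entry X i j v = mat (dim_row X) (dim_col X)
     (\<lambda>(r, c). if r = i - 1 \<and> c = j - 1 then v else X $$ (r, c))"

end

theory Submission
  imports Defs
begin
lemma mult_ent:
  assumes "i < dim_row A" "j < dim_col B" "dim_col A = dim_row B"
  shows "(A * B) $$ (i, j) = (\<Sum>k<dim_col A. A $$ (i, k) * B $$ (k, j))"
  using assms by (simp add: index_mult_mat scalar_prod_def atLeast0LessThan)

lemma hardmax_avg:
  fixes P :: "real mat"
  assumes "i < dim_row P" "k0 < dim_col P"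
    and "\<forall>k<dim_col P. P $$ (i,k) \<le> P $$ (i,k0)"
    and "\<forall>k<dim_col P. P $$ (i,k) = P $$ (i,k0) \<longrightarrow> v k = c"
  shows "(\<Sum>k<dim_col P. hardmax P $$ (i,k) * v k) = c"
proof -
  define n where "n = dim_col P"
  define m where "m = P $$ (i,k0)"
  define S where "S = {k. k < n \<and> P $$ (i, k) = m}"
  have M: "Max {P $$ (i, k) | k. k < n} = m"
  proof (rule Max_eqI)
    show "finite {P $$ (i, k) | k. k < n}" by simp
    show "\<And>y. y \<in> {P $$ (i, k) |k. k < n} \<Longrightarrow> y \<le> m" using assms(3) n_def m_def by auto
    show "m \<in> {P $$ (i, k) |k. k < n}" using assms(2) n_def m_def by auto
  qed
  have H: "\<And>k. k < n \<Longrightarrow> hardmax P $$ (i,k) = (if P $$ (i,k) = m then 1 / real (card S) else 0)"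
    using assms(1) M unfolding hardmax_def S_def n_def by (simp add: Let_def)
  have Ssub: "S \<subseteq> {..<n}" unfolding S_def by auto
  have fin: "finite S" using Ssub finite_subset by blast
  have ne: "card S > 0" using fin assms(2) unfolding S_def n_def m_def by (auto simp: card_gt_0_iff)
  have "(\<Sum>k<n. hardmax P $$ (i,k) * v k) = (\<Sum>k<n. if k \<in> S then c / real (card S) else 0)"
    apply (rule sum.cong, simp)
    using H assms(4) unfolding S_def n_def m_def by auto
  also have "\<dots> = (\<Sum>k\<in>S. c / real (card S))"
    using Ssub by (simp add: sum.If_cases Int_absorb1)
  also have "\<dots> = c" using ne by simp
  finally show ?thesis unfolding n_def .
qed

lemma psi_ent:
  fixes X WQ WK WV :: "real mat"
  assumes X: "X \<in> carrier_mat K d" and Q: "WQ \<in> carrier_mat d 2" and KK: "WK \<in> carrier_mat d 2"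
    and V: "WV \<in> carrier_mat d d" and i: "i < K" and j: "j < d"
  shows "psi (WQ, WK, WV) X (1\<^sub>m K) $$ (i, j) =
    (\<Sum>k<K. hardmax (X * WQ * transpose_mat WK * transpose_mat X) $$ (i,k) * (\<Sum>q<d. X $$ (k,q) * WV $$ (q,j)))"
proof -
  define H where "H = hardmax (X * WQ * transpose_mat WK * transpose_mat X)"
  have Hc: "H \<in> carrier_mat K K" using X Q KK unfolding H_def hardmax_def by auto
  have "psi (WQ, WK, WV) X (1\<^sub>m K) = H * (X * WV)"
  proof -
    have "psi (WQ, WK, WV) X (1\<^sub>m K) = 1\<^sub>m K * H * X * WV" unfolding psi_def H_def by simp
    also have "1\<^sub>m K * H = H" using Hc by simp
    also have "H * X * WV = H * (X * WV)" using Hc X V by (rule assoc_mult_mat)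
    finally show ?thesis .
  qed
  moreover have "(H * (X * WV)) $$ (i,j) = (\<Sum>k<K. H $$ (i,k) * (X * WV) $$ (k,j))"
    using Hc X V i j by (subst mult_ent) auto
  moreover have "\<And>k. k < K \<Longrightarrow> (X * WV) $$ (k,j) = (\<Sum>q<d. X $$ (k,q) * WV $$ (q,j))"
    using X V j by (subst mult_ent) auto
  ultimately show ?thesis unfolding H_def by simp
qed

lemma P_ent:
  fixes X WQ WK :: "real mat"
  assumes X: "X \<in> carrier_mat K d" and Q: "WQ \<in> carrier_mat d 2" and KK: "WK \<in> carrier_mat d 2"
    and i: "i < K" and k: "k < K"
  shows "(X * WQ * transpose_mat WK * transpose_mat X) $$ (i, k) =
    (\<Sum>r<2. (\<Sum>p<d. X $$ (i,p) * WQ $$ (p,r)) * (\<Sum>p<d. X $$ (k,p) * WK $$ (p,r)))"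
proof -
  have "X * WQ * transpose_mat WK * transpose_mat X = (X * WQ) * (transpose_mat WK * transpose_mat X)"
    by (rule assoc_mult_mat) (use X Q KK in auto)
  also have "transpose_mat WK * transpose_mat X = transpose_mat (X * WK)"
    using X KK by (simp add: transpose_mult)
  finally have e: "X * WQ * transpose_mat WK * transpose_mat X = (X * WQ) * transpose_mat (X * WK)" .
  have "((X * WQ) * transpose_mat (X * WK)) $$ (i,k) = (\<Sum>r<2. (X * WQ) $$ (i,r) * (X * WK) $$ (k,r))"
    using X Q KK i k by (subst mult_ent) auto
  also have "\<dots> = (\<Sum>r<2. (\<Sum>p<d. X $$ (i,p) * WQ $$ (p,r)) * (\<Sum>p<d. X $$ (k,p) * WK $$ (p,r)))"
    using X Q KK i k by (intro sum.cong refl) (auto simp: mult_ent simp del: index_mult_mat)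
  finally show ?thesis using e by simp
qed

lemma mlp_zero:
  fixes Y :: "real mat"
  assumes "Y \<in> carrier_mat K d"
  shows "relu_mat (relu_mat (relu_mat (Y * 0\<^sub>m d 1) * 0\<^sub>m 1 1) * 0\<^sub>m 1 1) * 0\<^sub>m 1 d + Y = Y"
  using assms by (intro eq_matI) (auto simp: relu_mat_def index_mult_mat scalar_prod_def)

definition ind :: "nat \<Rightarrow> nat \<Rightarrow> real" where "ind a p = (if p = a then 1 else 0)"

lemma sum_ind: "a < d \<Longrightarrow> (\<Sum>p<d. x p * ind a p) = x a"
  unfolding ind_def by (simp add: if_distrib cong: if_cong)

lemma sum_ind2: "a < d \<Longrightarrow> b < d \<Longrightarrow> (\<Sum>p<d. x p * (ind a p - ind b p)) = x a - x b"
  by (simp add: right_diff_distrib sum_subtractf sum_ind)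

theorem lemmaC6:
  fixes K d :: nat and \<Omega> :: real and C E Bg Bl :: nat
  assumes "\<Omega> > 0" and "K \<ge> 1"
    and "C \<in> {1..d}" and "E \<in> {1..d}" and "Bg \<in> {1..d}" and "Bl \<in> {1..d}"
    and "distinct [C, E, Bg, Bl]"
  shows "\<exists>L. valid_layer d L \<and>
    (\<forall>X A. X \<in> carrier_mat K d \<longrightarrow> A \<in> carrier_mat K K \<longrightarrow>
       (\<forall>i\<in>{1..K}. \<forall>j\<in>{1..d}. \<bar>ent X i j\<bar> \<le> \<Omega>) \<longrightarrow>
       ent X 1 Bg = 1 \<longrightarrow> (\<forall>i\<in>{2..K}. ent X i Bg = 0) \<longrightarrow>
       ent X 1 Bl = 0 \<longrightarrow> (\<forall>i\<in>{2..K}. ent X i Bl = 1) \<longrightarrow>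
       ent X 1 C = 0 \<longrightarrow> (\<forall>i\<in>{2..K}. ent X i C \<in> {0, 1}) \<longrightarrow>
       (\<forall>i\<in>{2..K}. ent X i E = 0) \<longrightarrow>
       apply_layer L X A =
         upd_entry X 1 E (if \<forall>i\<in>{2..K}. ent X i C \<noteq> 0 then 1 else 0))"
proof -
  define c where "c = C - 1"
  define e where "e = E - 1"
  define g where "g = Bg - 1"
  define l where "l = Bl - 1"
  have cd: "c < d" "e < d" "g < d" "l < d" using assms(3-6) unfolding c_def e_def g_def l_def by auto
  have dist: "c \<noteq> e" "c \<noteq> g" "c \<noteq> l" "e \<noteq> g" "e \<noteq> l" "g \<noteq> l"
    using assms(3-7) unfolding c_def e_def g_def l_def by auto
  define WQ :: "real mat" where "WQ = mat d 2 (\<lambda>(p,r). if r = 0 then ind g p else ind l p)"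
  define WK1 :: "real mat" where "WK1 = mat d 2 (\<lambda>(p,r). if r = 0 then ind l p - ind c p else ind g p)"
  define WV1 :: "real mat" where "WV1 = mat d d (\<lambda>(q,j). if j = e then ind c q - ind l q else 0)"
  define WV2 :: "real mat" where "WV2 = mat d d (\<lambda>(q,j). if j = e then ind g q - ind e q else 0)"
  define L where "L = \<lparr>heads_A = [], heads_AT = [], heads_I = [(WQ, WK1, WV1), (WQ, WQ, WV2)],
     W1 = (0\<^sub>m d 1 :: real mat), W2 = 0\<^sub>m 1 1, W3 = 0\<^sub>m 1 1, W4 = 0\<^sub>m 1 d\<rparr>"
  have QC: "WQ \<in> carrier_mat d 2" "WK1 \<in> carrier_mat d 2" "WV1 \<in> carrier_mat d d" "WV2 \<in> carrier_mat d d"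
    unfolding WQ_def WK1_def WV1_def WV2_def by auto
  have valid: "valid_layer d L"
    unfolding valid_layer_def L_def valid_head_def using QC by (auto intro!: exI[of _ "1::nat"])
  show ?thesis
  proof (intro exI[of _ L] conjI valid allI impI)
    fix X A :: "real mat"
    assume X: "X \<in> carrier_mat K d" and A: "A \<in> carrier_mat K K"
      and h1: "ent X 1 Bg = 1" and h2: "\<forall>i\<in>{2..K}. ent X i Bg = 0"
      and h3: "ent X 1 Bl = 0" and h4: "\<forall>i\<in>{2..K}. ent X i Bl = 1"
      and h5: "ent X 1 C = 0" and h6: "\<forall>i\<in>{2..K}. ent X i C \<in> {0, 1}"
      and h7: "\<forall>i\<in>{2..K}. ent X i E = 0"
    have x0: "X $$ (0,g) = 1" "X $$ (0,l) = 0" "X $$ (0,c) = 0"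
      using h1 h3 h5 unfolding ent_def g_def l_def c_def by auto
    have xk: "X $$ (k,g) = 0" "X $$ (k,l) = 1" "X $$ (k,c) \<in> {0,1}" "X $$ (k,e) = 0"
      if "1 \<le> k" "k < K" for k
    proof -
      have "Suc k \<in> {2..K}" using that by auto
      then show "X $$ (k,g) = 0" "X $$ (k,l) = 1" "X $$ (k,c) \<in> {0,1}" "X $$ (k,e) = 0"
        using h2 h4 h6 h7 unfolding ent_def g_def l_def c_def e_def by fastforce+
    qed
    define P1 where "P1 = X * WQ * transpose_mat WK1 * transpose_mat X"
    define P2 where "P2 = X * WQ * transpose_mat WQ * transpose_mat X"
    have dP: "dim_row P1 = K" "dim_col P1 = K" "dim_row P2 = K" "dim_col P2 = K"
      unfolding P1_def P2_def using X QC by auto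
    have P1e: "P1 $$ (i,k) = X $$ (i,g) * (X $$ (k,l) - X $$ (k,c)) + X $$ (i,l) * X $$ (k,g)"
      if "i < K" "k < K" for i k
      unfolding P1_def using that X QC cd
      by (subst P_ent[of _ K d]) (auto simp: numeral_2_eq_2 WQ_def WK1_def sum_ind sum_ind2)
    have P2e: "P2 $$ (i,k) = X $$ (i,g) * X $$ (k,g) + X $$ (i,l) * X $$ (k,l)"
      if "i < K" "k < K" for i k
      unfolding P2_def using that X QC cd
      by (subst P_ent[of _ K d]) (auto simp: numeral_2_eq_2 WQ_def sum_ind)
    define v1 where "v1 k = X $$ (k,c) - X $$ (k,l)" for k
    define v2 where "v2 k = X $$ (k,g) - X $$ (k,e)" for k
    have psi1: "psi (WQ, WK1, WV1) X (1\<^sub>m K) $$ (i,j) =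
        (if j = e then (\<Sum>k<K. hardmax P1 $$ (i,k) * v1 k) else 0)" if "i < K" "j < d" for i j
      unfolding P1_def using that X QC cd
      by (subst psi_ent[of _ K d]) (auto simp: WV1_def v1_def sum_ind2)
    have psi2: "psi (WQ, WQ, WV2) X (1\<^sub>m K) $$ (i,j) =
        (if j = e then (\<Sum>k<K. hardmax P2 $$ (i,k) * v2 k) else 0)" if "i < K" "j < d" for i j
      unfolding P2_def using that X QC cd
      by (subst psi_ent[of _ K d]) (auto simp: WV2_def v2_def sum_ind2)
    define z where "z = (if \<forall>i\<in>{2..K}. ent X i C \<noteq> 0 then 1 else 0 :: real)"
    have zz: "z = (if \<forall>k. 1 \<le> k \<and> k < K \<longrightarrow> X $$ (k,c) \<noteq> 0 then 1 else 0)"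
    proof -
      have "(\<forall>i\<in>{2..K}. ent X i C \<noteq> 0) = (\<forall>k. 1 \<le> k \<and> k < K \<longrightarrow> X $$ (k,c) \<noteq> 0)"
      proof
        assume H: "\<forall>i\<in>{2..K}. ent X i C \<noteq> 0"
        show "\<forall>k. 1 \<le> k \<and> k < K \<longrightarrow> X $$ (k,c) \<noteq> 0"
        proof (intro allI impI)
          fix k assume "1 \<le> k \<and> k < K"
          then have "Suc k \<in> {2..K}" by auto
          then show "X $$ (k,c) \<noteq> 0" using H unfolding ent_def c_def by fastforce
        qed
      next
        assume H: "\<forall>k. 1 \<le> k \<and> k < K \<longrightarrow> X $$ (k,c) \<noteq> 0"
        show "\<forall>i\<in>{2..K}. ent X i C \<noteq> 0"
        proof
          fix i assume "i \<in> {2..K}"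
          then have "1 \<le> i - 1 \<and> i - 1 < K" by auto
          then show "ent X i C \<noteq> 0" using H[rule_format, of "i - 1"] unfolding ent_def c_def by blast
        qed
      qed
      then show ?thesis unfolding z_def by simp
    qed
    have K0: "0 < K" using assms(2) by simp
    have A1: "(\<Sum>k<K. hardmax P1 $$ (0,k) * v1 k) = z - 1"
    proof (cases "\<forall>k. 1 \<le> k \<and> k < K \<longrightarrow> X $$ (k,c) \<noteq> 0")
      case True
      then have xc1: "X $$ (k,c) = 1" if "1 \<le> k" "k < K" for k using xk(3)[OF that] that by auto
      have P0: "P1 $$ (0,k) = 0" if "k < K" for k
        using that K0 x0 xc1 xk by (cases "k = 0") (auto simp: P1e)
      have "(\<Sum>k<dim_col P1. hardmax P1 $$ (0,k) * v1 k) = 0"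
        apply (rule hardmax_avg[of 0 P1 0])
        using dP K0 P0 x0 xc1 xk by (auto simp: v1_def) (metis less_one not_less xc1 xk(2))
      then show ?thesis using True zz dP by simp
    next
      case False
      then obtain k0 where k0: "1 \<le> k0" "k0 < K" "X $$ (k0,c) = 0" by auto
      have P0: "P1 $$ (0,k) = (if k = 0 then 0 else 1 - X $$ (k,c))" if "k < K" for k
        using that K0 x0 xk by (auto simp: P1e)
      have "(\<Sum>k<dim_col P1. hardmax P1 $$ (0,k) * v1 k) = -1"
      proof (rule hardmax_avg[of 0 P1 k0])
        show "0 < dim_row P1" "k0 < dim_col P1" using dP K0 k0 by auto
        show "\<forall>k<dim_col P1. P1 $$ (0, k) \<le> P1 $$ (0, k0)"
        proof (intro allI impI)
          fix k assume "k < dim_col P1"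
          then have kK: "k < K" using dP by simp
          show "P1 $$ (0, k) \<le> P1 $$ (0, k0)"
          proof (cases "k = 0")
            case True then show ?thesis using P0[OF kK] P0[OF k0(2)] k0 by simp
          next
            case False
            then have "X $$ (k,c) \<in> {0,1}" using xk(3)[OF _ kK] by simp
            then show ?thesis using False P0[OF kK] P0[OF k0(2)] k0 by auto
          qed
        qed
        show "\<forall>k<dim_col P1. P1 $$ (0, k) = P1 $$ (0, k0) \<longrightarrow> v1 k = -1"
          using dP P0 k0 xk(2) by (auto simp: v1_def)
      qed
      then show ?thesis using False zz dP by simp
    qed
    have A1' : "(\<Sum>k<K. hardmax P1 $$ (i,k) * v1 k) = 0" if "1 \<le> i" "i < K" for i
    proof -
      have P0: "P1 $$ (i,k) = (if k = 0 then 1 else 0)" if "k < K" for k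
        using that \<open>1 \<le> i\<close> \<open>i < K\<close> x0 xk by (auto simp: P1e)
      have "(\<Sum>k<dim_col P1. hardmax P1 $$ (i,k) * v1 k) = 0"
        apply (rule hardmax_avg[of i P1 0])
        using dP K0 P0 x0 that by (auto simp: v1_def)
      then show ?thesis using dP by simp
    qed
    have A2: "(\<Sum>k<K. hardmax P2 $$ (0,k) * v2 k) = 1 - X $$ (0,e)"
    proof -
      have P0: "P2 $$ (0,k) = (if k = 0 then 1 else 0)" if "k < K" for k
        using that x0 xk by (auto simp: P2e)
      have "(\<Sum>k<dim_col P2. hardmax P2 $$ (0,k) * v2 k) = 1 - X $$ (0,e)"
        apply (rule hardmax_avg[of 0 P2 0])
        using dP K0 P0 x0 by (auto simp: v2_def)
      then show ?thesis using dP by simp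
    qed
    have A2' : "(\<Sum>k<K. hardmax P2 $$ (i,k) * v2 k) = 0" if "1 \<le> i" "i < K" for i
    proof -
      have P0: "P2 $$ (i,k) = (if k = 0 then 0 else 1)" if "k < K" for k
        using that \<open>1 \<le> i\<close> \<open>i < K\<close> x0 xk by (auto simp: P2e)
      have "(\<Sum>k<dim_col P2. hardmax P2 $$ (i,k) * v2 k) = 0"
        apply (rule hardmax_avg[of i P2 1])
        using dP K0 P0 x0 xk that by (auto simp: v2_def)
      then show ?thesis using dP by simp
    qed
    define Y where "Y = f_attn L X A"
    have Yc: "Y \<in> carrier_mat K d" unfolding Y_def f_attn_def L_def sum_heads_def psi_def
      using X QC A by auto
    have Ye: "Y $$ (i,j) = psi (WQ, WK1, WV1) X (1\<^sub>m K) $$ (i,j) + psi (WQ, WQ, WV2) X (1\<^sub>m K) $$ (i,j) + X $$ (i,j)"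
      if "i < K" "j < d" for i j
      unfolding Y_def f_attn_def L_def sum_heads_def psi_def
      using that X QC A by simp
    have "apply_layer L X A = Y"
      unfolding apply_layer_def Y_def[symmetric] f_mlp_def
      using mlp_zero[OF Yc] by (simp add: L_def)
    also have "Y = upd_entry X 1 E z"
    proof (rule eq_matI)
      show "dim_row Y = dim_row (upd_entry X 1 E z)" "dim_col Y = dim_col (upd_entry X 1 E z)"
        using Yc X by (auto simp: upd_entry_def)
      fix i j assume ij: "i < dim_row (upd_entry X 1 E z)" "j < dim_col (upd_entry X 1 E z)"
      then have i: "i < K" and j: "j < d" using X by (auto simp: upd_entry_def)
      have U: "upd_entry X 1 E z $$ (i,j) = (if i = 0 \<and> j = e then z else X $$ (i,j))"
        using i j X by (simp add: upd_entry_def e_def)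
      show "Y $$ (i,j) = upd_entry X 1 E z $$ (i,j)"
      proof (cases "i = 0")
        case True
        then show ?thesis using U Ye[OF i j] psi1[OF i j] psi2[OF i j] A1 A2 by auto
      next
        case False
        then have "1 \<le> i" by simp
        then show ?thesis using U Ye[OF i j] psi1[OF i j] psi2[OF i j] A1'[OF _ i] A2'[OF _ i] xk(4)[OF _ i]
          by auto
      qed
    qed
    finally show "apply_layer L X A = upd_entry X 1 E (if \<forall>i\<in>{2..K}. ent X i C \<noteq> 0 then 1 else 0)"
      unfolding z_def .
  qed
qed

end
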